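(* Let $K,L$ be fields, let $n\ge m\ge 1$ be integers, and let $\sigma_1,\ldots,\sigma_n,\tau_1,\ldots,\tau_m\colon K\to L$ be field homomorphisms such that $\prod_{i=1}^n \sigma_i(a)=\prod_{j=1}^m \tau_j(a)$ for all $a\in K$. Then one of the following holds: (1) $n=m$ and there is a permutation $g\in S_n$ with $\tau_i=\sigma_{g(i)}$ for $1\le i\le n$; (2) $\operatorname{char}K=\operatorname{char}L=p>0$, and there are indices $1\le i_1<i_2<\cdots<i_p\le n$ with $\sigma_{i_1}=\sigma_{i_2}=\cdots=\sigma_{i_p}$. Moreover, for every $1\le j\le m$ there exist an integer $l$ with $-(m-1)\le l(p-1)\le n-1$ and an index $1\le i\le n$ with $\tau_j=\sigma_i\mathbf{p}^l$; and for every $1\le i\le n$ there exist an integer $l$ with $-(n-1)\le l(p-1)\le m-1$ and an index $1\le j\le m$ with $\sigma_i=\tau_j\mathbf{p}^l$.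
   Context: $\mathbf{p}$ denotes the Frobenius endomorphism $x\mapsto x^p$ of $L$. For field homomorphisms $\sigma,\tau\colon K\to L$ and an integer $l$, the equation $\tau=\sigma\mathbf{p}^l$ means: if $l\ge 0$, $\tau(a)=\sigma(a)^{p^l}$ for all $a\in K$; if $l<0$, $\tau(a)^{p^{-l}}=\sigma(a)$ for all $a\in K$ (i.e. $\sigma=\tau\mathbf{p}^{-l}$). *)

theory Defs
  imports Main "HOL-Combinatorics.Permutations"
begin

definition field_hom :: "('k::field \<Rightarrow> 'l::field) \<Rightarrow> bool" where
  "field_hom f \<longleftrightarrow> f 0 = 0 \<and> f 1 = 1 \<and>
     (\<forall>a b. f (a + b) = f a + f b) \<and> (\<forall>a b. f (a * b) = f a * f b)"

text \<open>tau = sigma p^l, with p the Frobenius x \<mapsto> x^p of L (l may be negative).\<close>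
definition frob_twist :: "('k \<Rightarrow> 'l::field) \<Rightarrow> nat \<Rightarrow> int \<Rightarrow> ('k \<Rightarrow> 'l) \<Rightarrow> bool" where
  "frob_twist \<sigma> p l \<tau> \<longleftrightarrow>
     (if l \<ge> 0 then (\<forall>a. \<tau> a = \<sigma> a ^ (p ^ nat l))
      else (\<forall>a. \<tau> a ^ (p ^ nat (- l)) = \<sigma> a))"

end

theory Submission imports Defs "HOL-Library.Multiset" "HOL-Computational_Algebra.Primes" begin

lemma dedekind:
  fixes F :: "('m \<Rightarrow> 'l::field) set" and mul :: "'m \<Rightarrow> 'm \<Rightarrow> 'm"
  assumes "finite F"
    and "\<forall>\<chi>\<in>F. \<chi> e = 1 \<and> (\<forall>x y. \<chi> (mul x y) = \<chi> x * \<chi> y)"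
    and "\<forall>x. (\<Sum>\<chi>\<in>F. c \<chi> * \<chi> x) = 0"
  shows "\<forall>\<chi>\<in>F. c \<chi> = 0"
  using assms
proof (induction F arbitrary: c rule: finite_induct)
  case empty then show ?case by simp
next
  case (insert \<psi> F)
  have rel: "c \<psi> * \<psi> x + (\<Sum>\<chi>\<in>F. c \<chi> * \<chi> x) = 0" for x
    using insert.prems(2)[rule_format, of x] insert.hyps by simp
  have zero: "\<forall>\<chi>\<in>F. c \<chi> * (\<chi> y - \<psi> y) = 0" for y
  proof (rule insert.IH)
    show "\<forall>\<chi>\<in>F. \<chi> e = 1 \<and> (\<forall>x y. \<chi> (mul x y) = \<chi> x * \<chi> y)"
      using insert.prems(1) by auto
    show "\<forall>x. (\<Sum>\<chi>\<in>F. c \<chi> * (\<chi> y - \<psi> y) * \<chi> x) = 0"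
    proof
      fix x
      have m: "\<chi> (mul y x) = \<chi> y * \<chi> x" if "\<chi> \<in> insert \<psi> F" for \<chi>
        using insert.prems(1) that by auto
      have "(\<Sum>\<chi>\<in>F. c \<chi> * (\<chi> y - \<psi> y) * \<chi> x)
          = (\<Sum>\<chi>\<in>F. c \<chi> * \<chi> (mul y x)) - \<psi> y * (\<Sum>\<chi>\<in>F. c \<chi> * \<chi> x)"
        by (simp add: m sum_distrib_left sum_subtractf algebra_simps)
      also have "\<dots> = - c \<psi> * \<psi> (mul y x) + \<psi> y * (c \<psi> * \<psi> x)"
      proof -
        have 1: "(\<Sum>\<chi>\<in>F. c \<chi> * \<chi> (mul y x)) = - c \<psi> * \<psi> (mul y x)"
          using rel[of "mul y x"] by (simp add: eq_neg_iff_add_eq_0 add.commute)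
        have 2: "(\<Sum>\<chi>\<in>F. c \<chi> * \<chi> x) = - (c \<psi> * \<psi> x)"
          using rel[of x] by (simp add: eq_neg_iff_add_eq_0 add.commute)
        show ?thesis unfolding 1 2 by simp
      qed
      also have "\<dots> = 0" by (simp add: m)
      finally show "(\<Sum>\<chi>\<in>F. c \<chi> * (\<chi> y - \<psi> y) * \<chi> x) = 0" .
    qed
  qed
  have cF: "\<forall>\<chi>\<in>F. c \<chi> = 0"
  proof
    fix \<chi> assume "\<chi> \<in> F"
    with insert.hyps have "\<chi> \<noteq> \<psi>" by auto
    then obtain y where "\<chi> y \<noteq> \<psi> y" by auto
    with zero[of y] \<open>\<chi> \<in> F\<close> show "c \<chi> = 0" by auto
  qed
  have "c \<psi> * \<psi> e = 0" using rel[of e] cF by simp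
  moreover have "\<psi> e = 1" using insert.prems(1) by auto
  ultimately show ?case using cF by auto
qed

lemma sum_mset_count:
  assumes "finite A" "set_mset M \<subseteq> A"
  shows "sum_mset (image_mset f M) = (\<Sum>x\<in>A. (of_nat (count M x) :: 'b::comm_semiring_1) * f x)"
  using assms(2)
proof (induction M)
  case empty then show ?case by simp
next
  case (add a M)
  have "(\<Sum>x\<in>A. (of_nat (count (add_mset a M) x) :: 'b) * f x)
      = (\<Sum>x\<in>A. of_nat (count M x) * f x + (if x = a then f x else 0))"
    by (rule sum.cong) (auto simp: algebra_simps)
  also have "\<dots> = (\<Sum>x\<in>A. of_nat (count M x) * f x) + (\<Sum>x\<in>A. (if x = a then f x else 0))"
    by (rule sum.distrib)
  also have "(\<Sum>x\<in>A. (if x = a then f x else 0)) = f a"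
    using add.prems assms(1) by (simp add: sum.delta')
  finally show ?case using add by (simp add: add.commute)
qed

lemma dedekind_mset:
  fixes Z W :: "('m \<Rightarrow> 'l::field) multiset" and mul :: "'m \<Rightarrow> 'm \<Rightarrow> 'm"
  assumes "\<forall>\<chi>\<in>#Z+W. \<chi> e = 1 \<and> (\<forall>x y. \<chi> (mul x y) = \<chi> x * \<chi> y)"
    and "\<forall>x. sum_mset (image_mset (\<lambda>\<chi>. \<chi> x) Z) = sum_mset (image_mset (\<lambda>\<chi>. \<chi> x) W)"
  shows "(of_nat (count Z \<chi>) :: 'l) = of_nat (count W \<chi>)"
proof -
  let ?A = "set_mset (Z + W)"
  let ?c = "\<lambda>\<chi>. (of_nat (count Z \<chi>) :: 'l) - of_nat (count W \<chi>)"
  have "\<forall>\<chi>\<in>?A. ?c \<chi> = 0"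
  proof (rule dedekind[where mul=mul and e=e])
    show "finite ?A" by simp
    show "\<forall>\<chi>\<in>?A. \<chi> e = 1 \<and> (\<forall>x y. \<chi> (mul x y) = \<chi> x * \<chi> y)" using assms(1) by blast
    show "\<forall>x. (\<Sum>\<chi>\<in>?A. ?c \<chi> * \<chi> x) = 0"
    proof
      fix x
      have "sum_mset (image_mset (\<lambda>\<chi>. \<chi> x) Z) = (\<Sum>\<chi>\<in>?A. of_nat (count Z \<chi>) * \<chi> x)"
        by (rule sum_mset_count) auto
      moreover have "sum_mset (image_mset (\<lambda>\<chi>. \<chi> x) W) = (\<Sum>\<chi>\<in>?A. of_nat (count W \<chi>) * \<chi> x)"
        by (rule sum_mset_count) auto
      ultimately show "(\<Sum>\<chi>\<in>?A. ?c \<chi> * \<chi> x) = 0"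
        using assms(2) by (simp add: algebra_simps sum_subtractf)
    qed
  qed
  then show ?thesis
    by (cases "\<chi> \<in> ?A") (auto simp: not_in_iff)
qed

definition Pm :: "('k \<Rightarrow> 'l::comm_monoid_mult) multiset \<Rightarrow> 'k \<Rightarrow> 'l" where
  "Pm C a = prod_mset (image_mset (\<lambda>\<phi>. \<phi> a) C)"

definition homs :: "('k::field \<Rightarrow> 'l::field) multiset \<Rightarrow> bool" where
  "homs C \<longleftrightarrow> (\<forall>\<phi>\<in>#C. field_hom \<phi>)"

definition red :: "('k \<Rightarrow> 'l::field) multiset \<Rightarrow> bool" where
  "red C \<longleftrightarrow> (\<forall>\<phi>. CHAR('l) = 0 \<or> count C \<phi> < CHAR('l))"

fun E :: "'a list \<Rightarrow> ('a multiset \<times> 'a multiset) multiset" where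
  "E [] = {#({#}, {#})#}"
| "E (x # xs) = image_mset (\<lambda>(U, V). (add_mset x U, V)) (E xs)
      + image_mset (\<lambda>(U, V). (U, add_mset x V)) (E xs)"

lemma E_sum: "z \<in># E xs \<Longrightarrow> fst z + snd z = mset xs"
  by (induction xs arbitrary: z) auto

lemma Pm_empty[simp]: "Pm {#} a = 1" by (simp add: Pm_def)
lemma Pm_add[simp]: "Pm (add_mset \<phi> C) a = \<phi> a * Pm C a" by (simp add: Pm_def)
lemma Pm_union: "Pm (A + B) a = Pm A a * Pm B a" by (simp add: Pm_def)
lemma Pm_single: "Pm {#\<phi>#} a = \<phi> a" by simp

lemma E_expand:
  fixes xs :: "('k::semiring_1 \<Rightarrow> 'l::comm_semiring_1) list"
  assumes "\<forall>\<phi>\<in>set xs. \<forall>a b. \<phi> (a + b) = \<phi> a + \<phi> b"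
  shows "Pm (mset xs) (a + b) = sum_mset (image_mset (\<lambda>z. Pm (fst z) a * Pm (snd z) b) (E xs))"
  using assms
proof (induction xs)
  case Nil then show ?case by simp
next
  case (Cons x xs)
  have IH: "Pm (mset xs) (a + b) = sum_mset (image_mset (\<lambda>z. Pm (fst z) a * Pm (snd z) b) (E xs))"
    using Cons by auto
  have "Pm (mset (x # xs)) (a + b) = (x a + x b) * Pm (mset xs) (a + b)"
    using Cons.prems by simp
  also have "\<dots> = x a * Pm (mset xs) (a + b) + x b * Pm (mset xs) (a + b)"
    by (simp add: algebra_simps)
  also have "x a * Pm (mset xs) (a + b) = sum_mset (image_mset (\<lambda>z. Pm (fst z) a * Pm (snd z) b) (image_mset (\<lambda>(U, V). (add_mset x U, V)) (E xs)))"
    unfolding IH by (simp add: sum_mset_distrib_left image_mset.compositionality case_prod_beta comp_def mult.assoc)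
  also have "x b * Pm (mset xs) (a + b) = sum_mset (image_mset (\<lambda>z. Pm (fst z) a * Pm (snd z) b) (image_mset (\<lambda>(U, V). (U, add_mset x V)) (E xs)))"
    unfolding IH by (simp add: sum_mset_distrib_left image_mset.compositionality case_prod_beta comp_def algebra_simps)
  finally show ?case by simp
qed

lemma count_image_inj: "inj f \<Longrightarrow> count (image_mset f M) (f z) = count M z"
  by (induction M) (auto simp: inj_eq)

lemma E_count0: "count (E xs) ({#}, mset xs) = 1"
proof (induction xs)
  case Nil then show ?case by simp
next
  case (Cons x xs)
  have inj: "inj (\<lambda>(U, V). (U, add_mset x V))" by (auto simp: inj_def)
  have "count (image_mset (\<lambda>(U, V). (add_mset x U, V)) (E xs)) ({#}, add_mset x (mset xs)) = 0"
    by (auto simp: count_image_mset)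
  moreover have "count (image_mset (\<lambda>(U, V). (U, add_mset x V)) (E xs)) ({#}, add_mset x (mset xs))
     = count (E xs) ({#}, mset xs)"
    using count_image_inj[OF inj, of "E xs" "({#}, mset xs)"] by simp
  ultimately show ?case using Cons by simp
qed

lemma E_fst_sub: "z \<in># E xs \<Longrightarrow> fst z \<subseteq># mset xs"
  using E_sum[of z xs] by (metis mset_subset_eq_add_left)

lemma E_snd_sub: "z \<in># E xs \<Longrightarrow> snd z \<subseteq># mset xs"
  using E_sum[of z xs] by (metis mset_subset_eq_add_right)

lemma E_count1:
  "\<phi> \<in> set xs \<Longrightarrow> count (E xs) ({#\<phi>#}, mset xs - {#\<phi>#}) = count (mset xs) \<phi>"
proof (induction xs)
  case Nil then show ?case by simp
next
  case (Cons x xs)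
  let ?f1 = "\<lambda>(U, V). (add_mset x U, V)"
  let ?f2 = "\<lambda>(U, V). (U, add_mset x V)"
  have inj1: "inj ?f1" and inj2: "inj ?f2" by (auto simp: inj_def)
  have cE: "count (E (x # xs)) t = count (image_mset ?f1 (E xs)) t + count (image_mset ?f2 (E xs)) t" for t
    by simp
  show ?case
  proof (cases "x = \<phi>")
    case True
    have t: "({#\<phi>#}, mset (x # xs) - {#\<phi>#}) = ?f1 ({#}, mset xs)" using True by simp
    have c1: "count (image_mset ?f1 (E xs)) ({#\<phi>#}, mset (x # xs) - {#\<phi>#}) = 1"
      unfolding t count_image_inj[OF inj1] by (rule E_count0)
    show ?thesis
    proof (cases "\<phi> \<in> set xs")
      case True2: True
      have t2: "({#\<phi>#}, mset (x # xs) - {#\<phi>#}) = ?f2 ({#\<phi>#}, mset xs - {#\<phi>#})"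
        using True True2 by simp
      have c2: "count (image_mset ?f2 (E xs)) ({#\<phi>#}, mset (x # xs) - {#\<phi>#}) = count (mset xs) \<phi>"
        unfolding t2 count_image_inj[OF inj2] using Cons.IH True2 by simp
      show ?thesis using c1 c2 cE True by simp
    next
      case False
      have "({#\<phi>#}, mset (x # xs) - {#\<phi>#}) \<notin># image_mset ?f2 (E xs)"
      proof
        assume "({#\<phi>#}, mset (x # xs) - {#\<phi>#}) \<in># image_mset ?f2 (E xs)"
        then obtain z where "z \<in># E xs" "?f2 z = ({#\<phi>#}, mset (x # xs) - {#\<phi>#})" by auto
        then have "{#\<phi>#} \<subseteq># mset xs" using E_fst_sub[of z xs] by (auto split: prod.splits)
        then show False using False by simp
      qed
      then have c2: "count (image_mset ?f2 (E xs)) ({#\<phi>#}, mset (x # xs) - {#\<phi>#}) = 0"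
        by (metis count_eq_zero_iff)
      have "count (mset xs) \<phi> = 0" using False by (simp add: not_in_iff)
      then show ?thesis using c1 c2 cE True by simp
    qed
  next
    case False
    then have inxs: "\<phi> \<in> set xs" using Cons.prems by simp
    have "({#\<phi>#}, mset (x # xs) - {#\<phi>#}) \<notin># image_mset ?f1 (E xs)"
      using False by (auto split: prod.splits)
    then have c1: "count (image_mset ?f1 (E xs)) ({#\<phi>#}, mset (x # xs) - {#\<phi>#}) = 0"
      by (metis count_eq_zero_iff)
    have t2: "({#\<phi>#}, mset (x # xs) - {#\<phi>#}) = ?f2 ({#\<phi>#}, mset xs - {#\<phi>#})"
      using False inxs by (simp add: insert_DiffM2[symmetric])
    have c2: "count (image_mset ?f2 (E xs)) ({#\<phi>#}, mset (x # xs) - {#\<phi>#}) = count (mset xs) \<phi>"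
      unfolding t2 count_image_inj[OF inj2] using Cons.IH inxs by simp
    show ?thesis using c1 c2 cE False by simp
  qed
qed

lemma fh_mult: "field_hom f \<Longrightarrow> f (a * b) = f a * f b" by (simp add: field_hom_def)
lemma fh_add: "field_hom f \<Longrightarrow> f (a + b) = f a + f b" by (simp add: field_hom_def)
lemma fh_1: "field_hom f \<Longrightarrow> f 1 = 1" by (simp add: field_hom_def)
lemma fh_0: "field_hom f \<Longrightarrow> f 0 = 0" by (simp add: field_hom_def)

lemma homs_sub: "homs C \<Longrightarrow> A \<subseteq># C \<Longrightarrow> homs A"
  unfolding homs_def by (meson mset_subset_eqD)

lemma red_sub: "red C \<Longrightarrow> A \<subseteq># C \<Longrightarrow> red A"
  unfolding red_def by (meson le_less_trans mset_subset_eq_count)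

lemma red_nz: "red C \<Longrightarrow> \<phi> \<in># C \<Longrightarrow> (of_nat (count C \<phi>) :: 'l::field) \<noteq> 0"
  for C :: "('k \<Rightarrow> 'l::field) multiset"
  unfolding red_def of_nat_eq_0_iff_char_dvd
  by (metis count_eq_zero_iff dvd_0_left_iff nat_dvd_not_less neq0_conv)

lemma Pm_mult: "homs C \<Longrightarrow> Pm C (a * b) = Pm C a * Pm C b"
  by (induction C) (auto simp: homs_def fh_mult algebra_simps)

lemma Pm_1: "homs C \<Longrightarrow> Pm C 1 = 1"
  by (induction C) (auto simp: homs_def fh_1)

lemma Pm_0: "homs C \<Longrightarrow> C \<noteq> {#} \<Longrightarrow> Pm C 0 = 0"
  by (cases C) (auto simp: homs_def fh_0)

lemma count_image_filter: "count (image_mset f M) y = size (filter_mset (\<lambda>z. f z = y) M)"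
  by (induction M) auto

lemma core:
  fixes C D :: "('k::field \<Rightarrow> 'l::field) multiset"
  assumes IH: "\<And>C' D' :: ('k \<Rightarrow> 'l) multiset. size C' + size D' < size C + size D \<Longrightarrow> homs C' \<Longrightarrow> homs D' \<Longrightarrow>
      red C' \<Longrightarrow> red D' \<Longrightarrow> (\<forall>a. Pm C' a = Pm D' a) \<Longrightarrow> C' = D'"
    and hC: "homs C" and hD: "homs D" and rC: "red C" and rD: "red D"
    and eq: "\<forall>a. Pm C a = Pm D a" and sC: "size C \<ge> 2" and nD: "D \<noteq> {#}"
  shows "C = D"
proof -
  obtain \<phi> where phi: "\<phi> \<in># C" using sC by (cases C) auto
  obtain xs where xs: "mset xs = C" using ex_mset by blast
  obtain ys where ys: "mset ys = D" using ex_mset by blast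
  define ch :: "('k \<Rightarrow> 'l) multiset \<times> ('k \<Rightarrow> 'l) multiset \<Rightarrow> 'k \<times> 'k \<Rightarrow> 'l"
    where "ch = (\<lambda>z w. Pm (fst z) (fst w) * Pm (snd z) (snd w))"
  define mul :: "'k \<times> 'k \<Rightarrow> 'k \<times> 'k \<Rightarrow> 'k \<times> 'k" where "mul = (\<lambda>x y. (fst x * fst y, snd x * snd y))"
  define Z where "Z = image_mset ch (E xs)"
  define W where "W = image_mset ch (E ys)"
  define X0 where "X0 = ch ({#\<phi>#}, C - {#\<phi>#})"
  have homsE: "homs (fst z) \<and> homs (snd z)" if "z \<in># E xs \<or> z \<in># E ys" for z
    using that E_fst_sub[of z xs] E_snd_sub[of z xs] E_fst_sub[of z ys] E_snd_sub[of z ys] homs_sub[OF hC] homs_sub[OF hD] xs ys by auto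
  have redE: "red (fst z) \<and> red (snd z)" if "z \<in># E xs \<or> z \<in># E ys" for z
    using that E_fst_sub[of z xs] E_snd_sub[of z xs] E_fst_sub[of z ys] E_snd_sub[of z ys] red_sub[OF rC] red_sub[OF rD] xs ys by auto
  have chars: "\<forall>\<chi>\<in>#Z+W. \<chi> (1,1) = 1 \<and> (\<forall>x y. \<chi> (mul x y) = \<chi> x * \<chi> y)"
  proof
    fix \<chi> assume "\<chi> \<in># Z + W"
    then obtain z where z: "z \<in># E xs \<or> z \<in># E ys" "\<chi> = ch z" unfolding Z_def W_def by auto
    show "\<chi> (1,1) = 1 \<and> (\<forall>x y. \<chi> (mul x y) = \<chi> x * \<chi> y)"
      using homsE[OF z(1)] z(2) by (auto simp: ch_def mul_def Pm_1 Pm_mult algebra_simps)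
  qed
  have hlist: "\<forall>\<phi>\<in>set xs. \<forall>a b. \<phi> (a + b) = \<phi> a + \<phi> b" "\<forall>\<phi>\<in>set ys. \<forall>a b. \<phi> (a + b) = \<phi> a + \<phi> b"
    using hC hD xs ys by (auto simp: homs_def fh_add)
  have sums: "\<forall>w. sum_mset (image_mset (\<lambda>\<chi>. \<chi> w) Z) = sum_mset (image_mset (\<lambda>\<chi>. \<chi> w) W)"
  proof
    fix w :: "'k \<times> 'k"
    have "sum_mset (image_mset (\<lambda>\<chi>. \<chi> w) Z) = Pm C (fst w + snd w)"
      unfolding Z_def ch_def using E_expand[OF hlist(1), of "fst w" "snd w"] xs
      by (simp add: image_mset.compositionality comp_def)
    moreover have "sum_mset (image_mset (\<lambda>\<chi>. \<chi> w) W) = Pm D (fst w + snd w)"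
      unfolding W_def ch_def using E_expand[OF hlist(2), of "fst w" "snd w"] ys
      by (simp add: image_mset.compositionality comp_def)
    ultimately show "sum_mset (image_mset (\<lambda>\<chi>. \<chi> w) Z) = sum_mset (image_mset (\<lambda>\<chi>. \<chi> w) W)"
      using eq by simp
  qed
  have ded: "(of_nat (count Z X0) :: 'l) = of_nat (count W X0)"
    by (rule dedekind_mset[OF chars sums])
  have hCphi: "homs (C - {#\<phi>#})" "red (C - {#\<phi>#})"
    using homs_sub[OF hC] red_sub[OF rC] by auto
  have rphi: "red {#\<phi>#}" using rC phi
    by (metis mset_subset_eq_single red_sub)
  have hphi: "homs {#\<phi>#}" using hC phi by (simp add: homs_def)
  have phi1: "\<phi> 1 = 1" using hC phi by (simp add: homs_def fh_1)
  have comp2: "\<forall>a. Pm (snd z) a = Pm (C - {#\<phi>#}) a" if z: "z \<in># E xs \<or> z \<in># E ys" and cz: "ch z = X0" for z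
  proof
    fix a
    have "ch z (1, a) = X0 (1, a)" using cz by simp
    then show "Pm (snd z) a = Pm (C - {#\<phi>#}) a"
      using homsE[OF z] hCphi phi1 by (simp add: ch_def X0_def Pm_1)
  qed
  have comp1: "\<forall>a. Pm (fst z) a = Pm {#\<phi>#} a" if z: "z \<in># E xs \<or> z \<in># E ys" and cz: "ch z = X0" for z
  proof
    fix a
    have "ch z (a, 1) = X0 (a, 1)" using cz by simp
    then show "Pm (fst z) a = Pm {#\<phi>#} a"
      using homsE[OF z] hCphi phi1 by (simp add: ch_def X0_def Pm_1)
  qed
  have sizeC1: "size (C - {#\<phi>#}) = size C - 1" using phi by (simp add: size_Diff_submset)
  have sizeD: "size D \<ge> 1" using nD by (simp add: Suc_le_eq nonempty_has_size)
  have detC: "z = ({#\<phi>#}, C - {#\<phi>#})" if z: "z \<in># E xs" and cz: "ch z = X0" for z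
  proof (cases "snd z = {#}")
    case True
    have "snd z = C - {#\<phi>#}"
    proof (rule IH)
      show "size (snd z) + size (C - {#\<phi>#}) < size C + size D" using True sizeC1 sizeD by simp
      show "homs (snd z)" "red (snd z)" using homsE redE z by auto
      show "homs (C - {#\<phi>#})" "red (C - {#\<phi>#})" by (rule hCphi)+
      show "\<forall>a. Pm (snd z) a = Pm (C - {#\<phi>#}) a" using comp2 z cz by blast
    qed
    then have "size (C - {#\<phi>#}) = 0" using True by simp
    then have False using sizeC1 sC by linarith
    then show ?thesis ..
  next
    case False
    have sz: "size (fst z) + size (snd z) = size C" using E_sum[OF z] xs by (metis size_union)
    have "size (snd z) \<ge> 1" using False by (simp add: Suc_le_eq nonempty_has_size)
    then have lt: "size (fst z) < size C" using sz by linarith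
    have f: "fst z = {#\<phi>#}"
    proof (rule IH)
      show "size (fst z) + size {#\<phi>#} < size C + size D" using lt sizeD by simp
      show "homs (fst z)" "red (fst z)" using homsE redE z by auto
      show "homs {#\<phi>#}" "red {#\<phi>#}" by (rule hphi, rule rphi)
      show "\<forall>a. Pm (fst z) a = Pm {#\<phi>#} a" using comp1 z cz by blast
    qed
    have "{#\<phi>#} + snd z = {#\<phi>#} + (C - {#\<phi>#})" using E_sum[OF z] f xs phi by simp
    then have "snd z = C - {#\<phi>#}" by simp
    with f show ?thesis by (cases z) auto
  qed
  have fZ: "filter_mset (\<lambda>z. ch z = X0) (E xs) = filter_mset (\<lambda>z. z = ({#\<phi>#}, C - {#\<phi>#})) (E xs)"
  proof (rule filter_mset_cong)
    fix z assume z: "z \<in># E xs"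
    show "(ch z = X0) = (z = ({#\<phi>#}, C - {#\<phi>#}))"
      using detC[OF z] by (auto simp: X0_def)
  qed simp
  have cZ: "count Z X0 = count C \<phi>"
    unfolding Z_def count_image_filter fZ filter_eq_replicate_mset
    using E_count1[of \<phi> xs] phi xs by (metis set_mset_mset size_replicate_mset)
  have "(of_nat (count W X0) :: 'l) \<noteq> 0"
    using ded cZ red_nz[OF rC phi] by simp
  then have "count W X0 \<noteq> 0" by (metis of_nat_0)
  then obtain z where z: "z \<in># E ys" "ch z = X0" unfolding W_def
    by (metis count_eq_zero_iff imageE set_image_mset)
  have s: "snd z = C - {#\<phi>#}"
  proof (rule IH)
    have "size (snd z) \<le> size D" using z E_snd_sub ys by (metis size_mset_mono)
    then show "size (snd z) + size (C - {#\<phi>#}) < size C + size D" using sizeC1 sC by linarith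
    show "homs (snd z)" "red (snd z)" using homsE redE z by auto
    show "homs (C - {#\<phi>#})" "red (C - {#\<phi>#})" by (rule hCphi)+
    show "\<forall>a. Pm (snd z) a = Pm (C - {#\<phi>#}) a" using comp2 z by blast
  qed
  have f: "fst z = {#\<phi>#}"
  proof (rule IH)
    have "size (fst z) \<le> size D" using z E_fst_sub ys by (metis size_mset_mono)
    then show "size (fst z) + size {#\<phi>#} < size C + size D" using sC by simp
    show "homs (fst z)" "red (fst z)" using homsE redE z by auto
    show "homs {#\<phi>#}" "red {#\<phi>#}" by (rule hphi, rule rphi)
    show "\<forall>a. Pm (fst z) a = Pm {#\<phi>#} a" using comp1 z by blast
  qed
  have "D = fst z + snd z" using E_sum[OF z(1)] ys by simp
  also have "\<dots> = C" using s f phi by simp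
  finally show ?thesis by simp
qed

lemma uniq:
  fixes C D :: "('k::field \<Rightarrow> 'l::field) multiset"
  shows "homs C \<Longrightarrow> homs D \<Longrightarrow> red C \<Longrightarrow> red D \<Longrightarrow> \<forall>a. Pm C a = Pm D a \<Longrightarrow> C = D"
proof (induction "size C + size D" arbitrary: C D rule: less_induct)
  case less
  have IH: "\<And>C' D' :: ('k \<Rightarrow> 'l) multiset. size C' + size D' < size C + size D \<Longrightarrow> homs C' \<Longrightarrow> homs D' \<Longrightarrow>
      red C' \<Longrightarrow> red D' \<Longrightarrow> (\<forall>a. Pm C' a = Pm D' a) \<Longrightarrow> C' = D'"
    using less.hyps by blast
  have IH': "\<And>C' D' :: ('k \<Rightarrow> 'l) multiset. size C' + size D' < size D + size C \<Longrightarrow> homs C' \<Longrightarrow> homs D' \<Longrightarrow>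
      red C' \<Longrightarrow> red D' \<Longrightarrow> (\<forall>a. Pm C' a = Pm D' a) \<Longrightarrow> C' = D'"
    using less.hyps by (simp add: add.commute)
  show ?case
  proof (cases "C = {#} \<or> D = {#}")
    case True
    have "Pm C 0 = Pm D 0" using less.prems by simp
    then show ?thesis using True Pm_0[OF less.prems(1)] Pm_0[OF less.prems(2)] by (auto; metis)
  next
    case False
    show ?thesis
    proof (cases "size C \<ge> 2")
      case True
      show ?thesis by (rule core[OF IH less.prems(1-5) True]) (use False in auto)
    next
      case nC: False
      show ?thesis
      proof (cases "size D \<ge> 2")
        case True
        have "D = C" by (rule core[OF IH' less.prems(2,1,4,3)]) (use less.prems(5) True False in auto)
        then show ?thesis by simp
      next
        case nD: False
        have "size C = 1" "size D = 1" using nC nD False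
          by (auto simp: nonempty_has_size)
        then obtain \<phi> \<psi> where "C = {#\<phi>#}" "D = {#\<psi>#}" by (metis size_1_singleton_mset)
        then show ?thesis using less.prems(5) by (auto simp: fun_eq_iff)
      qed
    qed
  qed
qed

definition frp :: "nat \<Rightarrow> ('k \<Rightarrow> 'l::field) \<Rightarrow> ('k \<Rightarrow> 'l)" where
  "frp l \<phi> = (\<lambda>a. \<phi> a ^ (CHAR('l) ^ l))"

lemma frp_0[simp]: "frp 0 \<phi> = \<phi>" by (simp add: frp_def)

lemma frp_Suc: "frp l (frp 1 \<phi>) = frp (Suc l) \<phi>"
  by (simp add: frp_def fun_eq_iff power_mult[symmetric] mult.commute)

lemma prime_CHAR_field: "CHAR('l::field) > 0 \<Longrightarrow> prime CHAR('l)"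
  by (rule prime_CHAR_semidom)

lemma frp_hom:
  assumes "CHAR('l::field) > 0" "field_hom (\<phi> :: 'k::field \<Rightarrow> 'l)"
  shows "field_hom (frp l \<phi>)"
proof -
  have pr: "prime CHAR('l)" using prime_CHAR_field assms(1) by blast
  have pos: "CHAR('l) ^ l > 0" using assms(1) by simp
  show ?thesis
    using assms(2) pos unfolding field_hom_def frp_def
    by (auto simp: power_mult_distrib freshmans_dream'[OF pr refl])
qed

lemma carry:
  fixes X :: "('k::field \<Rightarrow> 'l::field) multiset"
  assumes p: "CHAR('l) > 0"
  shows "homs X \<Longrightarrow> \<exists>C k. red C \<and> homs C \<and> (\<forall>a. Pm C a = Pm X a)
     \<and> size C + k * (CHAR('l) - 1) = size X \<and> (red X \<longleftrightarrow> k = 0) \<and> (red X \<longrightarrow> C = X)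
     \<and> (\<forall>y\<in>#C. \<exists>x\<in>#X. \<exists>l\<le>k. y = frp l x) \<and> (\<forall>x\<in>#X. \<exists>y\<in>#C. \<exists>l\<le>k. y = frp l x)"
proof (induction "size X" arbitrary: X rule: less_induct)
  case less
  show ?case
  proof (cases "red X")
    case True
    show ?thesis
      by (rule exI[of _ X], rule exI[of _ 0]) (use True less.prems in \<open>auto intro: exI[of _ 0]\<close>)
  next
    case False
    let ?p = "CHAR('l)"
    have p2: "?p \<ge> 2" using p CHAR_not_1'[where 'a='l] by linarith
    obtain \<phi> where cnt: "count X \<phi> \<ge> ?p" using False p unfolding red_def by (auto simp: not_less)
    define R where "R = replicate_mset ?p \<phi>"
    define X2 where "X2 = X - R"
    define X' where "X' = add_mset (frp 1 \<phi>) X2"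
    have RX: "R \<subseteq># X" unfolding R_def using cnt by (simp add: count_le_replicate_mset_subset_eq)
    have XR: "X = R + X2" unfolding X2_def using RX by simp
    have phiX: "\<phi> \<in># X" using cnt p by (metis count_eq_zero_iff not_gr0 le_zero_eq)
    have hphi: "field_hom \<phi>" using less.prems phiX by (simp add: homs_def)
    have sX: "size X = ?p + size X2" using XR by (simp add: R_def)
    have sX': "size X' = size X2 + 1" by (simp add: X'_def)
    have hX2: "homs X2" using homs_sub[OF less.prems] XR by (metis mset_subset_eq_add_right)
    have hX': "homs X'" using hX2 frp_hom[OF p hphi] by (simp add: X'_def homs_def)
    have PX': "Pm X' a = Pm X a" for a
      by (simp add: X'_def XR Pm_union R_def Pm_def frp_def)
    obtain C k where C: "red C" "homs C" "\<forall>a. Pm C a = Pm X' a"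
       "size C + k * (?p - 1) = size X'"
       "\<forall>y\<in>#C. \<exists>x\<in>#X'. \<exists>l\<le>k. y = frp l x" "\<forall>x\<in>#X'. \<exists>y\<in>#C. \<exists>l\<le>k. y = frp l x"
    proof -
      have "size X' < size X" using sX sX' p2 by linarith
      from less.hyps[OF this hX'] show ?thesis using that by blast
    qed
    show ?thesis
    proof (intro exI[of _ C] exI[of _ "Suc k"] conjI)
      show "red C" "homs C" by (rule C(1), rule C(2))
      show "\<forall>a. Pm C a = Pm X a" using C(3) PX' by simp
      show "size C + Suc k * (?p - 1) = size X" using C(4) sX sX' p2 by simp
      show "red X \<longleftrightarrow> Suc k = 0" using False by simp
      show "red X \<longrightarrow> C = X" using False by simp
      show "\<forall>y\<in>#C. \<exists>x\<in>#X. \<exists>l\<le>Suc k. y = frp l x"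
      proof
        fix y assume "y \<in># C"
        then obtain x l where x: "x \<in># X'" "l \<le> k" "y = frp l x" using C(5) by blast
        show "\<exists>x\<in>#X. \<exists>l\<le>Suc k. y = frp l x"
        proof (cases "x = frp 1 \<phi>")
          case True
          then show ?thesis using x phiX frp_Suc by (metis Suc_le_mono)
        next
          case False
          then have "x \<in># X2" using x(1) by (simp add: X'_def)
          then have "x \<in># X" using XR by simp
          then show ?thesis using x le_SucI by blast
        qed
      qed
      show "\<forall>x\<in>#X. \<exists>y\<in>#C. \<exists>l\<le>Suc k. y = frp l x"
      proof
        fix x assume xX: "x \<in># X"
        show "\<exists>y\<in>#C. \<exists>l\<le>Suc k. y = frp l x"
        proof (cases "x = \<phi>")
          case True
          have "frp 1 \<phi> \<in># X'" by (simp add: X'_def)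
          then obtain y l where "y \<in># C" "l \<le> k" "y = frp l (frp 1 \<phi>)" using C(6) by blast
          then show ?thesis using True frp_Suc by (metis Suc_le_mono)
        next
          case False
          have "count X2 x = count X x" using False by (simp add: X2_def R_def)
          then have "x \<in># X2" using xX by (metis count_eq_zero_iff)
          then have "x \<in># X'" by (simp add: X'_def)
          then obtain y l where "y \<in># C" "l \<le> k" "y = frp l x" using C(6) by blast
          then show ?thesis using le_SucI by blast
        qed
      qed
    qed
  qed
qed

lemma frob_inj:
  assumes "CHAR('l::field) > 0" "(u::'l) ^ (CHAR('l) ^ a) = v ^ (CHAR('l) ^ a)"
  shows "u = v"
proof -
  have pr: "prime CHAR('l)" using prime_CHAR_field assms(1) by blast
  have "((u - v) + v) ^ (CHAR('l) ^ a) = (u - v) ^ (CHAR('l) ^ a) + v ^ (CHAR('l) ^ a)"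
    by (rule freshmans_dream'[OF pr refl])
  then have "(u - v) ^ (CHAR('l) ^ a) = 0" using assms(2) by simp
  then show ?thesis by simp
qed

lemma twist:
  fixes f g :: "'k \<Rightarrow> 'l::field"
  assumes p: "CHAR('l) > 0" and eq: "frp a f = frp b g"
  shows "frob_twist g CHAR('l) (int b - int a) f"
proof -
  let ?p = "CHAR('l)"
  have e: "f x ^ (?p ^ a) = g x ^ (?p ^ b)" for x using eq by (metis frp_def)
  show ?thesis
  proof (cases "a \<le> b")
    case True
    have "f x = g x ^ (?p ^ (b - a))" for x
    proof (rule frob_inj[OF p, where a=a])
      have "(g x ^ (?p ^ (b - a))) ^ (?p ^ a) = g x ^ (?p ^ b)"
        using True by (simp add: power_mult[symmetric] power_add[symmetric])
      then show "f x ^ (?p ^ a) = (g x ^ (?p ^ (b - a))) ^ (?p ^ a)" using e by simp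
    qed
    moreover have "nat (int b - int a) = b - a" using True by simp
    ultimately show ?thesis using True unfolding frob_twist_def by simp
  next
    case False
    have "f x ^ (?p ^ (a - b)) = g x" for x
    proof (rule frob_inj[OF p, where a=b])
      have "(f x ^ (?p ^ (a - b))) ^ (?p ^ b) = f x ^ (?p ^ a)"
        using False by (simp add: power_mult[symmetric] power_add[symmetric])
      then show "(f x ^ (?p ^ (a - b))) ^ (?p ^ b) = g x ^ (?p ^ b)" using e by simp
    qed
    moreover have "nat (- (int b - int a)) = a - b" using False by simp
    ultimately show ?thesis using False unfolding frob_twist_def by simp
  qed
qed

lemma hom_of_nat: "field_hom f \<Longrightarrow> f (of_nat k) = of_nat k"
  by (induction k) (auto simp: fh_add fh_1 fh_0)

lemma hom_zero_iff: "field_hom (f :: 'k::field \<Rightarrow> 'l::field) \<Longrightarrow> f x = 0 \<longleftrightarrow> x = 0"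
proof
  assume h: "field_hom f" and "f x = 0"
  show "x = 0"
  proof (rule ccontr)
    assume "x \<noteq> 0"
    then have "f x * f (inverse x) = 1" using h by (metis fh_1 fh_mult right_inverse)
    then show False using \<open>f x = 0\<close> by simp
  qed
qed (simp add: fh_0)

lemma hom_CHAR:
  assumes "field_hom (f :: 'k::field \<Rightarrow> 'l::field)"
  shows "CHAR('k) = CHAR('l)"
proof -
  have "(of_nat k :: 'k) = 0 \<longleftrightarrow> (of_nat k :: 'l) = 0" for k
    using hom_zero_iff[OF assms, of "of_nat k"] hom_of_nat[OF assms, of k] by simp
  then have "CHAR('k) dvd k \<longleftrightarrow> CHAR('l) dvd k" for k by (simp add: of_nat_eq_0_iff_char_dvd)
  then show ?thesis by (meson dvd_antisym dvd_refl)
qed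

lemma bounds:
  fixes a b kA kB c N M p :: nat
  assumes "b \<le> kB" "a \<le> kA" "c \<ge> 1" "c + kB * (p - 1) = N" "c + kA * (p - 1) = M" "p \<ge> 2"
  shows "- (int M - 1) \<le> (int b - int a) * (int p - 1) \<and> (int b - int a) * (int p - 1) \<le> int N - 1"
proof -
  have pp: "int (p - 1) = int p - 1" using assms(6) by simp
  have N: "int c + int kB * (int p - 1) = int N" using assms(4) pp by (metis of_nat_add of_nat_mult)
  have M: "int c + int kA * (int p - 1) = int M" using assms(5) pp by (metis of_nat_add of_nat_mult)
  have b: "int b * (int p - 1) \<le> int kB * (int p - 1)" by (rule mult_right_mono) (use assms in auto)
  have a: "int a * (int p - 1) \<le> int kA * (int p - 1)" by (rule mult_right_mono) (use assms in auto)
  have a0: "0 \<le> int a * (int p - 1)" "0 \<le> int b * (int p - 1)" using assms(6) by auto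
  have "(int b - int a) * (int p - 1) = int b * (int p - 1) - int a * (int p - 1)" by (simp add: algebra_simps)
  then show ?thesis using N M a b a0 assms(3) by linarith
qed

theorem theorem1p4:
  fixes \<sigma> \<tau> :: "nat \<Rightarrow> 'k::field \<Rightarrow> 'l::field" and n m :: nat
  assumes "1 \<le> m" and "m \<le> n"
    and "\<forall>i\<in>{1..n}. field_hom (\<sigma> i)"
    and "\<forall>j\<in>{1..m}. field_hom (\<tau> j)"
    and "\<forall>a. (\<Prod>i=1..n. \<sigma> i a) = (\<Prod>j=1..m. \<tau> j a)"
  shows "(n = m \<and> (\<exists>g. g permutes {1..n} \<and> (\<forall>i\<in>{1..n}. \<tau> i = \<sigma> (g i))))
    \<or> (\<exists>p. p > 0 \<and> CHAR('k) = p \<and> CHAR('l) = p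
         \<and> (\<exists>idx :: nat \<Rightarrow> nat. strict_mono_on {1..p} idx \<and> idx ` {1..p} \<subseteq> {1..n}
               \<and> (\<forall>k\<in>{1..p}. \<sigma> (idx k) = \<sigma> (idx 1)))
         \<and> (\<forall>j\<in>{1..m}. \<exists>l::int. \<exists>i\<in>{1..n}.
               - (int m - 1) \<le> l * (int p - 1) \<and> l * (int p - 1) \<le> int n - 1
               \<and> frob_twist (\<sigma> i) p l (\<tau> j))
         \<and> (\<forall>i\<in>{1..n}. \<exists>l::int. \<exists>j\<in>{1..m}.
               - (int n - 1) \<le> l * (int p - 1) \<and> l * (int p - 1) \<le> int m - 1
               \<and> frob_twist (\<tau> j) p l (\<sigma> i)))"
proof -
  define S where "S = image_mset \<sigma> (mset_set {1..n})"
  define T where "T = image_mset \<tau> (mset_set {1..m})"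
  have hS: "homs S" using assms(3) by (auto simp: S_def homs_def)
  have hT: "homs T" using assms(4) by (auto simp: T_def homs_def)
  have PS: "Pm S a = (\<Prod>i=1..n. \<sigma> i a)" for a
    by (simp add: S_def Pm_def prod_unfold_prod_mset image_mset.compositionality comp_def)
  have PT: "Pm T a = (\<Prod>j=1..m. \<tau> j a)" for a
    by (simp add: T_def Pm_def prod_unfold_prod_mset image_mset.compositionality comp_def)
  have eqST: "\<forall>a. Pm S a = Pm T a" using assms(5) PS PT by simp
  have sS: "size S = n" and sT: "size T = m" by (simp_all add: S_def T_def)
  have memS: "x \<in># S \<Longrightarrow> \<exists>i\<in>{1..n}. x = \<sigma> i" for x by (auto simp: S_def)
  have memT: "x \<in># T \<Longrightarrow> \<exists>j\<in>{1..m}. x = \<tau> j" for x by (auto simp: T_def)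
  have case1: "n = m \<and> (\<exists>g. g permutes {1..n} \<and> (\<forall>i\<in>{1..n}. \<tau> i = \<sigma> (g i)))" if "S = T"
  proof -
    have nm: "n = m" using that sS sT by simp
    have "image_mset \<tau> (mset_set {1..n}) = image_mset \<sigma> (mset_set {1..n})"
      using that nm by (simp add: S_def T_def)
    from image_mset_eq_implies_permutes[OF _ this]
    obtain g where "g permutes {1..n}" "\<forall>i\<in>{1..n}. \<tau> i = \<sigma> (g i)" by auto
    then show ?thesis using nm by blast
  qed
  show ?thesis
  proof (cases "CHAR('l) = 0")
    case True
    have "red S" "red T" using True by (auto simp: red_def)
    then have "S = T" using uniq[OF hS hT _ _ eqST] by blast
    then show ?thesis using case1 by blast
  next
    case False
    let ?p = "CHAR('l)"
    have p: "?p > 0" using False by simp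
    have p2: "?p \<ge> 2" using p CHAR_not_1'[where 'a='l] by linarith
    obtain CS kS where CS: "red CS" "homs CS" "\<forall>a. Pm CS a = Pm S a"
       "size CS + kS * (?p - 1) = size S" "red S \<longleftrightarrow> kS = 0" "red S \<longrightarrow> CS = S"
       "\<forall>y\<in>#CS. \<exists>x\<in>#S. \<exists>l\<le>kS. y = frp l x" "\<forall>x\<in>#S. \<exists>y\<in>#CS. \<exists>l\<le>kS. y = frp l x"
      using carry[OF p hS] by blast
    obtain CT kT where CT: "red CT" "homs CT" "\<forall>a. Pm CT a = Pm T a"
       "size CT + kT * (?p - 1) = size T" "red T \<longleftrightarrow> kT = 0" "red T \<longrightarrow> CT = T"
       "\<forall>y\<in>#CT. \<exists>x\<in>#T. \<exists>l\<le>kT. y = frp l x" "\<forall>x\<in>#T. \<exists>y\<in>#CT. \<exists>l\<le>kT. y = frp l x"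
      using carry[OF p hT] by blast
    have CST: "CS = CT" using uniq[OF CS(2) CT(2) CS(1) CT(1)] CS(3) CT(3) eqST by simp
    show ?thesis
    proof (cases "red S \<and> red T")
      case True
      then have "S = T" using uniq[OF hS hT _ _ eqST] by blast
      then show ?thesis using case1 by blast
    next
      case nred: False
      have n1: "1 \<in> {1..n}" using assms(1,2) by simp
      have charK: "CHAR('k) = ?p" using hom_CHAR[of "\<sigma> 1"] assms(3) n1 by blast
      have notredS: "\<not> red S"
      proof
        assume rS: "red S"
        then have "kS = 0" "CS = S" using CS(5,6) by auto
        moreover have "kT \<noteq> 0" using rS nred CT(5) by blast
        ultimately have "n + kT * (?p - 1) = m" using CT(4) CST sS sT by simp
        moreover have "kT * (?p - 1) \<ge> 1" using \<open>kT \<noteq> 0\<close> p2 by simp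
        ultimately show False using assms(2) by linarith
      qed
      then obtain \<phi> where cnt: "count S \<phi> \<ge> ?p" unfolding red_def using p by (auto simp: not_less)
      have "count S \<phi> = card {i\<in>{1..n}. \<sigma> i = \<phi>}"
        by (simp only: S_def count_image_filter filter_mset_mset_set[OF finite_atLeastAtMost] size_mset_set)
      then have "?p \<le> card {i\<in>{1..n}. \<sigma> i = \<phi>}" using cnt by simp
      then obtain B where B: "B \<subseteq> {i\<in>{1..n}. \<sigma> i = \<phi>}" "card B = ?p" "finite B"
        by (rule obtain_subset_with_card_n)
      define xs where "xs = sorted_list_of_set B"
      define idx where "idx = (\<lambda>k. xs ! (k - 1))"
      have lxs: "length xs = ?p" using B by (simp add: xs_def)
      have sxs: "set xs = B" using B by (simp add: xs_def)
      have stxs: "sorted_wrt (<) xs" by (simp add: xs_def strict_sorted_list_of_set)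
      have idxB: "idx k \<in> B" if "k \<in> {1..?p}" for k
      proof -
        have "k - 1 < length xs" using that lxs by auto
        then show ?thesis unfolding idx_def using sxs nth_mem by blast
      qed
      have idx_ok: "\<exists>idx :: nat \<Rightarrow> nat. strict_mono_on {1..?p} idx \<and> idx ` {1..?p} \<subseteq> {1..n}
               \<and> (\<forall>k\<in>{1..?p}. \<sigma> (idx k) = \<sigma> (idx 1))"
      proof (intro exI[of _ idx] conjI)
        show "strict_mono_on {1..?p} idx"
        proof (rule strict_mono_onI)
          fix r s assume "r \<in> {1..?p}" "s \<in> {1..?p}" "r < s"
          then show "idx r < idx s" unfolding idx_def
            using sorted_wrt_nth_less[OF stxs, of "r - 1" "s - 1"] lxs by auto
        qed
        show "idx ` {1..?p} \<subseteq> {1..n}"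
        proof
          fix x assume "x \<in> idx ` {1..?p}"
          then obtain k where "k \<in> {1..?p}" "x = idx k" by blast
          then have "x \<in> B" using idxB by blast
          then show "x \<in> {1..n}" using B(1) by blast
        qed
        have "1 \<in> {1..?p}" using p by simp
        then have "\<sigma> (idx 1) = \<phi>" using idxB B(1) by blast
        moreover have "\<sigma> (idx k) = \<phi>" if "k \<in> {1..?p}" for k using idxB[OF that] B(1) by blast
        ultimately show "\<forall>k\<in>{1..?p}. \<sigma> (idx k) = \<sigma> (idx 1)" by simp
      qed
      have Sne: "S \<noteq> {#}" using sS assms(1,2) by auto
      then obtain x0 where "x0 \<in># S" by blast
      then obtain y0 where "y0 \<in># CS" using CS(8) by blast
      then have cpos: "size CS \<ge> 1" by (cases CS) auto
      have tw1: "\<forall>j\<in>{1..m}. \<exists>l::int. \<exists>i\<in>{1..n}.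
               - (int m - 1) \<le> l * (int ?p - 1) \<and> l * (int ?p - 1) \<le> int n - 1
               \<and> frob_twist (\<sigma> i) ?p l (\<tau> j)"
      proof
        fix j assume j: "j \<in> {1..m}"
        then have "\<tau> j \<in># T" by (simp add: T_def)
        then obtain y a where y: "y \<in># CT" "a \<le> kT" "y = frp a (\<tau> j)" using CT(8) by blast
        then obtain x b where x: "x \<in># S" "b \<le> kS" "y = frp b x" using CS(7) CST by blast
        obtain i where i: "i \<in> {1..n}" "x = \<sigma> i" using memS[OF x(1)] by blast
        have "frob_twist (\<sigma> i) ?p (int b - int a) (\<tau> j)"
          using twist[OF p, of a "\<tau> j" b "\<sigma> i"] y(3) x(3) i(2) by simp
        moreover have "- (int m - 1) \<le> (int b - int a) * (int ?p - 1) \<and> (int b - int a) * (int ?p - 1) \<le> int n - 1"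
          by (rule bounds[OF x(2) y(2) cpos]) (use CS(4) CT(4) CST sS sT p2 in auto)
        ultimately show "\<exists>l::int. \<exists>i\<in>{1..n}.
               - (int m - 1) \<le> l * (int ?p - 1) \<and> l * (int ?p - 1) \<le> int n - 1
               \<and> frob_twist (\<sigma> i) ?p l (\<tau> j)" using i(1) by blast
      qed
      have tw2: "\<forall>i\<in>{1..n}. \<exists>l::int. \<exists>j\<in>{1..m}.
               - (int n - 1) \<le> l * (int ?p - 1) \<and> l * (int ?p - 1) \<le> int m - 1
               \<and> frob_twist (\<tau> j) ?p l (\<sigma> i)"
      proof
        fix i assume i: "i \<in> {1..n}"
        then have "\<sigma> i \<in># S" by (simp add: S_def)
        then obtain y b where y: "y \<in># CS" "b \<le> kS" "y = frp b (\<sigma> i)" using CS(8) by blast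
        then obtain x a where x: "x \<in># T" "a \<le> kT" "y = frp a x" using CT(7) CST by blast
        obtain j where j: "j \<in> {1..m}" "x = \<tau> j" using memT[OF x(1)] by blast
        have "frob_twist (\<tau> j) ?p (int a - int b) (\<sigma> i)"
          using twist[OF p, of b "\<sigma> i" a "\<tau> j"] y(3) x(3) j(2) by simp
        moreover have "- (int n - 1) \<le> (int a - int b) * (int ?p - 1) \<and> (int a - int b) * (int ?p - 1) \<le> int m - 1"
          by (rule bounds[OF x(2) y(2) cpos]) (use CS(4) CT(4) CST sS sT p2 in auto)
        ultimately show "\<exists>l::int. \<exists>j\<in>{1..m}.
               - (int n - 1) \<le> l * (int ?p - 1) \<and> l * (int ?p - 1) \<le> int m - 1
               \<and> frob_twist (\<tau> j) ?p l (\<sigma> i)" using j(1) by blast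
      qed
      show ?thesis
        apply (rule disjI2)
        apply (rule exI[of _ ?p])
        using p charK idx_ok tw1 tw2 by blast
    qed
  qed
qed

end
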